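(* Let $v_1\ge v_2>0$ and $b\in(0,1)$. A strategy profile $(X,Y)$ with $\mathbf{E}(X)=1$ and $\mathbf{E}(Y)=b$ is a Nash equilibrium of the discrete all-pay auction with valuations $v_1,v_2$ if and only if $v_2=2$, $b\in(0,4/v_1]$, $X=U_{\mathrm{O}}^1$ and $Y=(1-b)\delta_0+b\big(\lambda U_{\mathrm{O}}^1+(1-\lambda)U_{\mathrm{E}}^1\big)$ for some $\lambda\in[0,1]$ with $\frac{4}{bv_1}-\frac{2}{b}+1\le\lambda\le\frac{4}{bv_1}-1$. In this case $P^1(X,Y)=\frac{v_1}{2}(2-b)-1$ and $P^2(Y,X)=0$.
   Context: Discrete all-pay auction: two players, 1 and 2, value a prize at $v_1$ and $v_2$ respectively, where $v_1\ge v_2>0$. A (mixed) strategy is a probability distribution on $\mathbb{Z}_{\ge 0}$ with finite mean, identified with a $\mathbb{Z}_{\ge0}$-valued random variable; the two players' choices are independent. If player 1 uses $X$ and player 2 uses $Y$, the expected payoffs are $P^1(X,Y)=v_1\Pr(X>Y)+\frac{v_1}{2}\Pr(X=Y)-\mathbf{E}(X)$ and $P^2(Y,X)=v_2\Pr(Y>X)+\frac{v_2}{2}\Pr(X=Y)-\mathbf{E}(Y)$. A Nash equilibrium of the all-pay auction is a pair $(X,Y)$ with $P^1(X,Y)\ge P^1(X',Y)$ and $P^2(Y,X)\ge P^2(Y',X)$ for all strategies $X',Y'$. $\delta_j$ denotes the point mass at $j$; $\lambda A+(1-\lambda)B$ denotes the mixture of distributions $A$ and $B$. Special distributions: $U_{\mathrm{O}}^1=\delta_1$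 (uniform on $\{1\}$) and $U_{\mathrm{E}}^1$ is the uniform distribution on $\{0,2\}$. *)

theory Defs
  imports "HOL-Probability.Probability"
begin

definition is_strategy :: "nat pmf \<Rightarrow> bool" where
  "is_strategy X \<longleftrightarrow> integrable (measure_pmf X) real"

definition mean :: "nat pmf \<Rightarrow> real" where
  "mean X = measure_pmf.expectation X real"

definition payoff :: "real \<Rightarrow> nat pmf \<Rightarrow> nat pmf \<Rightarrow> real" where
  "payoff v X Y =
     v * measure_pmf.prob (pair_pmf X Y) {(x, y). x > y}
     + v / 2 * measure_pmf.prob (pair_pmf X Y) {(x, y). x = y}
     - mean X"

definition nash :: "real \<Rightarrow> real \<Rightarrow> nat pmf \<Rightarrow> nat pmf \<Rightarrow> bool" where
  "nash v1 v2 X Y \<longleftrightarrow> is_strategy X \<and> is_strategy Y \<and>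
     (\<forall>X'. is_strategy X' \<longrightarrow> payoff v1 X' Y \<le> payoff v1 X Y) \<and>
     (\<forall>Y'. is_strategy Y' \<longrightarrow> payoff v2 Y' X \<le> payoff v2 Y X)"

definition mix :: "real \<Rightarrow> 'a pmf \<Rightarrow> 'a pmf \<Rightarrow> 'a pmf" where
  "mix lam A B = bind_pmf (bernoulli_pmf lam) (\<lambda>c. if c then A else B)"

definition U_O1 :: "nat pmf" where "U_O1 = return_pmf 1"
definition U_E1 :: "nat pmf" where "U_E1 = pmf_of_set {0, 2}"

end

theory Submission
  imports Defs
begin


definition pure :: "real \<Rightarrow> nat pmf \<Rightarrow> nat \<Rightarrow> real" where
  "pure v Y k = v * (measure_pmf.prob Y {..<k} + pmf Y k / 2) - real k"

lemma prob_pair: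
  "measure_pmf.prob (pair_pmf X Y) A = measure_pmf.expectation X (\<lambda>x. measure_pmf.prob Y {y. (x,y) \<in> A})"
proof -
  have "pair_pmf X Y = bind_pmf X (\<lambda>x. map_pmf (Pair x) Y)"
    unfolding pair_pmf_def map_pmf_def by simp
  then have "measure_pmf.prob (pair_pmf X Y) A = measure (measure_pmf X \<bind> (\<lambda>x. measure_pmf (map_pmf (Pair x) Y))) A"
    by (simp add: measure_pmf_bind)
  also have "\<dots> = measure_pmf.expectation X (\<lambda>x. measure_pmf.prob (map_pmf (Pair x) Y) A)"
    by (rule measure_pmf.measure_bind[where N="count_space UNIV"]) (auto simp: measure_pmf_in_subprob_algebra)
  also have "\<dots> = measure_pmf.expectation X (\<lambda>x. measure_pmf.prob Y {y. (x,y) \<in> A})"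
    by (simp add: measure_map_pmf vimage_def)
  finally show ?thesis .
qed

lemma payoff_eq:
  assumes "is_strategy X"
  shows "payoff v X Y = measure_pmf.expectation X (pure v Y)"
proof -
  have 1: "measure_pmf.prob (pair_pmf X Y) {(x, y). x > y} = measure_pmf.expectation X (\<lambda>x. measure_pmf.prob Y {..<x})"
    unfolding prob_pair by (rule Bochner_Integration.integral_cong) (auto simp: lessThan_def)
  have 2: "measure_pmf.prob (pair_pmf X Y) {(x, y). x = y} = measure_pmf.expectation X (\<lambda>x. pmf Y x)"
    unfolding prob_pair measure_pmf_single[symmetric]
    by (rule Bochner_Integration.integral_cong) auto
  have i1: "integrable X (\<lambda>x. measure_pmf.prob Y {..<x})"
    by (rule measure_pmf.integrable_const_bound[where B=1]) auto
  have i2: "integrable X (\<lambda>x. pmf Y x)"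
    by (rule measure_pmf.integrable_const_bound[where B=1]) (auto simp: pmf_le_1)
  have i3: "integrable X real" using assms by (simp add: is_strategy_def)
  have "measure_pmf.expectation X (pure v Y) =
     measure_pmf.expectation X (\<lambda>x. v * measure_pmf.prob Y {..<x} + v / 2 * pmf Y x) - measure_pmf.expectation X real"
    unfolding pure_def
    using i1 i2 i3 by (subst Bochner_Integration.integral_diff[symmetric]) (auto intro!: Bochner_Integration.integral_cong simp: algebra_simps)
  also have "measure_pmf.expectation X (\<lambda>x. v * measure_pmf.prob Y {..<x} + v / 2 * pmf Y x) =
     v * measure_pmf.expectation X (\<lambda>x. measure_pmf.prob Y {..<x}) + v / 2 * measure_pmf.expectation X (\<lambda>x. pmf Y x)"
    using i1 i2 by simp
  finally show ?thesis unfolding payoff_def 1 2 mean_def by simp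
qed

lemma integrable_pure: "is_strategy X \<Longrightarrow> integrable X (pure v Y)"
proof -
  assume a: "is_strategy X"
  have i1: "integrable X (\<lambda>x. measure_pmf.prob Y {..<x})"
    by (rule measure_pmf.integrable_const_bound[where B=1]) auto
  have i2: "integrable X (\<lambda>x. pmf Y x)"
    by (rule measure_pmf.integrable_const_bound[where B=1]) (auto simp: pmf_le_1)
  have i3: "integrable X real" using a by (simp add: is_strategy_def)
  show ?thesis unfolding pure_def using i1 i2 i3 by auto
qed

lemma strategy_return: "is_strategy (return_pmf k)"
  unfolding is_strategy_def by (rule integrable_measure_pmf_finite) simp

lemma payoff_return: "payoff v (return_pmf k) Y = pure v Y k"
  by (simp add: payoff_eq strategy_return)

lemma support_eq:
  assumes X: "is_strategy X" and le: "\<And>k. pure v Y k \<le> payoff v X Y" and k: "k \<in> set_pmf X"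
  shows "pure v Y k = payoff v X Y"
proof -
  let ?u = "payoff v X Y"
  have int: "integrable X (\<lambda>x. ?u - pure v Y x)"
    using integrable_pure[OF X] by auto
  have "measure_pmf.expectation X (\<lambda>x. ?u - pure v Y x) = ?u - measure_pmf.expectation X (pure v Y)"
    using integrable_pure[OF X] by (subst Bochner_Integration.integral_diff) auto
  also have "\<dots> = 0" using payoff_eq[OF X] by simp
  finally have "AE x in X. ?u - pure v Y x = 0"
    using integral_nonneg_eq_0_iff_AE[OF int] le by (simp add: AE_measure_pmf_iff)
  then show ?thesis using k by (simp add: AE_measure_pmf_iff)
qed

lemma pure_sum: "pure v Y k = v * (sum (pmf Y) {..<k} + pmf Y k / 2) - real k"
  unfolding pure_def by (simp add: measure_measure_pmf_finite)

lemma pure0: "pure v Y 0 = v * pmf Y 0 / 2"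
  by (simp add: pure_sum)
lemma pure1: "pure v Y 1 = v * (pmf Y 0 + pmf Y 1 / 2) - 1"
  by (simp add: pure_sum)
lemma pure2: "pure v Y 2 = v * (pmf Y 0 + pmf Y 1 + pmf Y 2 / 2) - 2"
  by (simp add: pure_sum numeral_2_eq_2 lessThan_Suc)

lemma pmf012: "pmf (Y::nat pmf) 0 + pmf Y 1 + pmf Y 2 \<le> 1"
proof -
  have "measure_pmf.prob Y {0,1,2} \<le> 1" by simp
  then show ?thesis by (simp add: measure_measure_pmf_finite)
qed

lemma pure_le: assumes "v \<ge> 0" shows "pure v Y k \<le> v - real k"
proof -
  have "sum (pmf Y) {..<k} + pmf Y k = sum (pmf Y) {..k}"
    by (simp add: lessThan_Suc_atMost[symmetric])
  also have "\<dots> = measure_pmf.prob Y {..k}" by (simp add: measure_measure_pmf_finite)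
  also have "\<dots> \<le> 1" by simp
  finally have "sum (pmf Y) {..<k} + pmf Y k / 2 \<le> 1" using pmf_nonneg[of Y k] by linarith
  then show ?thesis unfolding pure_sum using assms by (simp add: mult_left_le)
qed

lemma pure_big:
  assumes "set_pmf Y \<subseteq> {..2}" "k \<ge> 3"
  shows "pure v Y k = v - real k"
proof -
  have "measure_pmf.prob Y {..<k} = 1"
    using assms by (subst measure_pmf.prob_eq_1) (auto simp: AE_measure_pmf_iff)
  moreover have "pmf Y k = 0" using assms by (auto simp: set_pmf_iff)
  ultimately show ?thesis by (simp add: pure_def)
qed

lemma mean_lower:
  assumes "is_strategy Y"
  shows "mean Y \<ge> 2 - 2 * pmf Y 0 - pmf Y 1"
proof -
  let ?f = "\<lambda>y::nat. 2 - 2 * indicator {0} y - indicator {1} y :: real"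
  have "measure_pmf.expectation Y ?f = 2 - 2 * pmf Y 0 - pmf Y 1"
    by (simp add: measure_pmf_single[symmetric] measure_pmf.emeasure_eq_measure)
  moreover have "measure_pmf.expectation Y ?f \<le> measure_pmf.expectation Y real"
  proof (rule integral_mono)
    show "integrable Y ?f"
      by (rule measure_pmf.integrable_const_bound[where B=2]) (auto simp: indicator_def)
    show "integrable Y real" using assms unfolding is_strategy_def .
  qed (auto simp: indicator_def)
  ultimately show ?thesis by (simp add: mean_def)
qed

lemma mean_X1:
  assumes X: "is_strategy X" and z: "pmf X 0 = 0" and m: "mean X = 1"
  shows "X = return_pmf 1"
proof -
  have int: "integrable X (\<lambda>x. real x - 1)" using X unfolding is_strategy_def by auto
  have nn: "AE x in X. 0 \<le> real x - 1"
    using z by (auto simp: AE_measure_pmf_iff set_pmf_iff) (metis Suc_leI gr0I)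
  have "measure_pmf.expectation X (\<lambda>x. real x - 1) = 0"
    using X m unfolding is_strategy_def mean_def by (subst Bochner_Integration.integral_diff) auto
  then have "AE x in X. real x - 1 = 0" using integral_nonneg_eq_0_iff_AE[OF int nn] by simp
  then have "set_pmf X \<subseteq> {1}" by (auto simp: AE_measure_pmf_iff)
  then show ?thesis by (simp add: set_pmf_subset_singleton)
qed

lemma exists_big:
  assumes X: "is_strategy X" and z: "pmf X 0 > 0" and m: "mean X = 1"
  shows "\<exists>M\<in>set_pmf X. M \<ge> 2"
proof (rule ccontr)
  assume "\<not> ?thesis"
  then have sub: "set_pmf X \<subseteq> {0,1}" by force
  have "pmf X 0 + pmf X 1 = 1" using sum_pmf_eq_1[OF _ sub] by simp
  moreover have "mean X = pmf X 1"
    unfolding mean_def by (subst integral_measure_pmf_real[of "{0,1}"]) (use sub in auto)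
  ultimately show False using z m by simp
qed

lemma exists_pos:
  assumes m: "mean Y = b" and b: "b > 0"
  shows "\<exists>j\<in>set_pmf Y. j \<ge> 1"
proof (rule ccontr)
  assume "\<not> ?thesis"
  then have "set_pmf Y \<subseteq> {0}" by force
  then have "Y = return_pmf 0" by (simp add: set_pmf_subset_singleton)
  then show False using m b by (simp add: mean_def)
qed

lemma supp012:
  assumes sub: "set_pmf Y \<subseteq> {..2::nat}"
  shows "pmf Y 0 + pmf Y 1 + pmf Y 2 = 1" "mean Y = pmf Y 1 + 2 * pmf Y 2"
proof -
  have e: "{..2::nat} = {0,1,2}" by auto
  show "pmf Y 0 + pmf Y 1 + pmf Y 2 = 1" using sum_pmf_eq_1[OF _ sub] by (simp add: e)
  show "mean Y = pmf Y 1 + 2 * pmf Y 2"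
    unfolding mean_def by (subst integral_measure_pmf_real[of "{0,1,2}"]) (use sub in auto)
qed

lemma pmf_mix:
  assumes "0 \<le> lam" "lam \<le> 1"
  shows "pmf (mix lam A B) k = lam * pmf A k + (1 - lam) * pmf B k"
  using assms unfolding mix_def by (simp add: pmf_bind)

lemma pmf_UE1: "pmf U_E1 k = (if k = 0 \<or> k = 2 then 1/2 else 0)"
  unfolding U_E1_def by (simp add: indicator_def)

lemma pure_r1_0: "pure v (return_pmf 1) 0 = 0"
  by (simp add: pure_def)
lemma pure_r1_1: "pure v (return_pmf 1) 1 = v / 2 - 1"
  by (simp add: pure_def)
lemma pure_r1_2: "k \<ge> 2 \<Longrightarrow> pure v (return_pmf 1) k = v - real k"
  by (simp add: pure_def indicator_def)

lemma pure_r1_S: "pure v (return_pmf (Suc 0)) 0 = 0" "pure v (return_pmf (Suc 0)) (Suc 0) = v / 2 - 1"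
  "k \<ge> 2 \<Longrightarrow> pure v (return_pmf (Suc 0)) k = v - real k"
  using pure_r1_0 pure_r1_1 pure_r1_2 by simp_all

lemma nec:
  fixes v1 v2 b :: real and X Y :: "nat pmf"
  assumes v: "v1 \<ge> v2" "v2 > 0" and b: "0 < b" "b < 1"
    and XS: "is_strategy X" and YS: "is_strategy Y" and mX: "mean X = 1" and mY: "mean Y = b"
    and N: "nash v1 v2 X Y"
  shows "v2 = 2 \<and> b \<le> 4 / v1 \<and> X = U_O1 \<and>
            (\<exists>lam. 0 \<le> lam \<and> lam \<le> 1 \<and>
                   4 / (b * v1) - 2 / b + 1 \<le> lam \<and> lam \<le> 4 / (b * v1) - 1 \<and>
                   Y = mix (1 - b) (return_pmf 0) (mix lam U_O1 U_E1))"
proof -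
  have le1: "\<And>k. pure v1 Y k \<le> payoff v1 X Y"
    using N strategy_return payoff_return unfolding nash_def by metis
  have le2: "\<And>k. pure v2 X k \<le> payoff v2 Y X"
    using N strategy_return payoff_return unfolding nash_def by metis
  have eq1: "\<And>k. k \<in> set_pmf X \<Longrightarrow> pure v1 Y k = payoff v1 X Y"
    using support_eq[OF XS le1] by blast
  have eq2: "\<And>k. k \<in> set_pmf Y \<Longrightarrow> pure v2 X k = payoff v2 Y X"
    using support_eq[OF YS le2] by blast
  define c0 c1 c2 where "c0 = pmf Y 0" and "c1 = pmf Y 1" and "c2 = pmf Y 2"
  have mb: "b \<ge> 2 - 2 * c0 - c1" using mean_lower[OF YS] mY by (simp add: c0_def c1_def)
  have s3: "c0 + c1 + c2 \<le> 1" using pmf012[of Y] by (simp add: c0_def c1_def c2_def)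
  have nn: "c0 \<ge> 0" "c1 \<ge> 0" "c2 \<ge> 0" by (simp_all add: c0_def c1_def c2_def)
  have v1p: "v1 > 0" using v by linarith
  have X0: "pmf X 0 = 0"
  proof (rule ccontr)
    assume "pmf X 0 \<noteq> 0"
    then have p0: "pmf X 0 > 0" using pmf_nonneg[of X 0] by linarith
    then have z: "0 \<in> set_pmf X" by (simp add: set_pmf_iff)
    obtain M where M: "M \<in> set_pmf X" "M \<ge> 2" using exists_big[OF XS p0 mX] by blast
    have e0: "v1 * c0 / 2 = payoff v1 X Y" using eq1[OF z] by (simp add: pure0 c0_def)
    have l1: "v1 * (c0 + c1 / 2) - 1 \<le> payoff v1 X Y" using le1[of 1] unfolding pure1 c0_def c1_def by simp
    have "2 * c0 + c1 \<le> 1"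
    proof (cases "M = 2")
      case True
      have e2: "v1 * (c0 + c1 + c2 / 2) - 2 = payoff v1 X Y"
        using eq1[OF M(1)] unfolding True pure2 c0_def c1_def c2_def by simp
      have "v1 * c0 \<le> v1 * c2" using e0 e2 l1 by (simp add: algebra_simps)
      then have "c0 \<le> c2" using v1p by simp
      then show ?thesis using s3 by linarith
    next
      case False
      then have M3: "M \<ge> 3" using M by linarith
      have "pure v1 Y M \<le> v1 - real M" using pure_le v1p by simp
      moreover have "real M \<ge> 3" using M3 by simp
      ultimately have A: "v1 * (1 - c0 / 2) \<ge> 3" using eq1[OF M(1)] e0 by (simp add: algebra_simps)
      have B: "v1 * (c0 + c1) \<le> 2" using e0 l1 by (simp add: algebra_simps)
      have "(c0 + c1) * 3 \<le> (c0 + c1) * (v1 * (1 - c0 / 2))"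
        using A nn by (intro mult_left_mono) auto
      moreover have "(1 - c0 / 2) * (v1 * (c0 + c1)) \<le> (1 - c0 / 2) * 2"
        using B s3 nn by (intro mult_left_mono) auto
      moreover have "(c0 + c1) * (v1 * (1 - c0 / 2)) = (1 - c0 / 2) * (v1 * (c0 + c1))"
        by (simp add: algebra_simps)
      ultimately have "(c0 + c1) * 3 \<le> (1 - c0 / 2) * 2" by linarith
      then show ?thesis using nn by (simp add: algebra_simps)
    qed
    then show False using mb b by linarith
  qed
  have X1: "X = return_pmf 1" using mean_X1[OF XS X0 mX] .
  have c0p: "c0 > 0" using mb b s3 nn by linarith
  then have z: "0 \<in> set_pmf Y" by (simp add: set_pmf_iff c0_def)
  have u2: "payoff v2 Y X = 0" using eq2[OF z] by (simp add: X1 pure_r1_0 pure_r1_S)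
  obtain j where j: "j \<in> set_pmf Y" "j \<ge> 1" using exists_pos[OF mY b(1)] by blast
  have l21: "v2 / 2 - 1 \<le> 0" using le2[of 1] u2 unfolding X1 pure_r1_1 by simp
  have v2: "v2 = 2"
  proof (cases "j = 1")
    case True then show ?thesis using eq2[OF j(1)] u2 unfolding True X1 pure_r1_1 by simp
  next
    case False
    then have "j \<ge> 2" using j by linarith
    then have "v2 = real j" using eq2[OF j(1)] u2 by (simp add: X1 pure_r1_2 pure_r1_S)
    moreover have "real j \<ge> 2" using \<open>j \<ge> 2\<close> by simp
    ultimately show ?thesis using l21 by linarith
  qed
  have sub: "set_pmf Y \<subseteq> {..2}"
  proof
    fix k assume k: "k \<in> set_pmf Y"
    show "k \<in> {..2}"
    proof (rule ccontr)
      assume "k \<notin> {..2}"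
      then have "k \<ge> 2" "real k > 2" by auto
      then show False using eq2[OF k] u2 v2 by (simp add: X1 pure_r1_2 pure_r1_S)
    qed
  qed
  have t: "c0 + c1 + c2 = 1" "b = c1 + 2 * c2"
    using supp012[OF sub] mY by (auto simp: c0_def c1_def c2_def)
  have one: "1 \<in> set_pmf X" using X1 by simp
  have u1: "payoff v1 X Y = v1 * (c0 + c1 / 2) - 1" using eq1[OF one] unfolding pure1 c0_def c1_def by simp
  have A: "v1 * (c0 + c1) \<ge> 2" using le1[of 0] u1 unfolding pure0 c0_def by (simp add: algebra_simps)
  have B: "v1 * (c1 + c2) \<le> 2" using le1[of 2] u1 unfolding pure2 c0_def c1_def c2_def by (simp add: algebra_simps)
  define lam where "lam = c1 / b"
  have bl: "b * lam = c1" using b by (simp add: lam_def)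
  have l0: "0 \<le> lam" using nn b by (simp add: lam_def)
  have l1: "lam \<le> 1" using nn b t by (simp add: lam_def)
  have lo: "4 / (b * v1) - 2 / b + 1 \<le> lam"
  proof -
    have "c0 + c1 = 1 - c2" using t by linarith
    then have A': "v1 * (1 - c2) \<ge> 2" using A by simp
    have "4 \<le> (2 - 2 * c2) * v1" using A' by (simp add: algebra_simps)
    then have "4 / v1 \<le> 2 - 2 * c2" using v1p by (simp add: divide_le_eq)
    then have "4 / v1 - 2 + b \<le> b * lam" using bl t by linarith
    then have "(4 / v1 - 2 + b) / b \<le> lam" using b by (simp add: field_simps)
    moreover have "(4 / v1 - 2 + b) / b = 4 / (b * v1) - 2 / b + 1" using b v1p by (simp add: field_simps)
    ultimately show ?thesis by simp
  qed
  have hi: "lam \<le> 4 / (b * v1) - 1"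
  proof -
    have "(c1 + b) * v1 \<le> 4" using B t by (simp add: algebra_simps)
    then have "c1 + b \<le> 4 / v1" using v1p by (simp add: le_divide_eq)
    then have "b * lam \<le> 4 / v1 - b" using bl by linarith
    then have "lam \<le> (4 / v1 - b) / b" using b by (simp add: field_simps)
    moreover have "(4 / v1 - b) / b = 4 / (b * v1) - 1" using b v1p by (simp add: field_simps)
    ultimately show ?thesis by simp
  qed
  have b4: "b \<le> 4 / v1"
  proof -
    have "b * v1 \<le> 2 * (v1 * (c1 + c2))" using t nn v1p by (simp add: algebra_simps)
    then have "b * v1 \<le> 4" using B by linarith
    then show ?thesis using v1p by (simp add: le_divide_eq)
  qed
  have Yeq: "Y = mix (1 - b) (return_pmf 0) (mix lam U_O1 U_E1)"
  proof (rule pmf_eqI)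
    fix i
    have "pmf (mix (1 - b) (return_pmf 0) (mix lam U_O1 U_E1)) i =
      (1 - b) * indicator {i} 0 + b * (lam * indicator {i} 1 + (1 - lam) * (if i = 0 \<or> i = 2 then 1/2 else 0))"
      using b l0 l1 by (simp add: pmf_mix pmf_UE1 U_O1_def)
    moreover have "pmf Y i = (if i = 0 then c0 else if i = 1 then c1 else if i = 2 then c2 else 0)"
      using sub by (auto simp: c0_def c1_def c2_def set_pmf_iff)
    ultimately show "pmf Y i = pmf (mix (1 - b) (return_pmf 0) (mix lam U_O1 U_E1)) i"
      using bl t by (auto simp: algebra_simps)
  qed
  show ?thesis using v2 b4 X1 l0 l1 lo hi Yeq by (auto simp: U_O1_def)
qed

lemma suff:
  fixes v1 b lam :: real and X Y :: "nat pmf"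
  assumes v1: "v1 \<ge> 2" and b: "0 < b" "b < 1" and b4: "b \<le> 4 / v1"
    and l0: "0 \<le> lam" and l1: "lam \<le> 1"
    and lo: "4 / (b * v1) - 2 / b + 1 \<le> lam" and hi: "lam \<le> 4 / (b * v1) - 1"
    and XS: "is_strategy X" and YS: "is_strategy Y"
    and X1: "X = U_O1" and Yeq: "Y = mix (1 - b) (return_pmf 0) (mix lam U_O1 U_E1)"
  shows "nash v1 2 X Y \<and> payoff v1 X Y = v1 / 2 * (2 - b) - 1 \<and> payoff 2 Y X = 0"
proof -
  have pY: "pmf Y i = (if i = 0 then 1 - b/2 - b*lam/2 else if i = 1 then b * lam
       else if i = 2 then b/2 - b*lam/2 else 0)" for i
    using b l0 l1 unfolding Yeq by (auto simp: pmf_mix pmf_UE1 U_O1_def algebra_simps)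
  have sub: "set_pmf Y \<subseteq> {..2}"
  proof
    fix k assume "k \<in> set_pmf Y"
    then have "pmf Y k \<noteq> 0" by (simp add: set_pmf_iff)
    then show "k \<in> {..2}" using pY[of k] by (auto split: if_splits)
  qed
  have v1p: "v1 > 0" using v1 by linarith
  have bv: "b * v1 > 0" using b v1p by simp
  have lo': "4 - 2 * v1 + b * v1 \<le> lam * (b * v1)"
  proof -
    have "(4 / (b * v1) - 2 / b + 1) * (b * v1) \<le> lam * (b * v1)"
      using lo bv by (intro mult_right_mono) auto
    moreover have "(4 / (b * v1) - 2 / b + 1) * (b * v1) = 4 - 2 * v1 + b * v1"
      using b v1p by (simp add: field_simps)
    ultimately show ?thesis by simp
  qed
  have hi': "lam * (b * v1) \<le> 4 - b * v1"
  proof -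
    have "lam * (b * v1) \<le> (4 / (b * v1) - 1) * (b * v1)"
      using hi bv by (intro mult_right_mono) auto
    moreover have "(4 / (b * v1) - 1) * (b * v1) = 4 - b * v1"
      using b v1p by (simp add: field_simps)
    ultimately show ?thesis by simp
  qed
  have b4': "b * v1 \<le> 4" using b4 v1p by (simp add: le_divide_eq)
  have y0: "pmf Y 0 = 1 - b/2 - b*lam/2" and y1: "pmf Y 1 = b * lam" and y2: "pmf Y 2 = b/2 - b*lam/2"
    using pY[of 0] pY[of 1] pY[of 2] by simp_all
  have q0: "pure v1 Y 0 = v1 / 2 - b * v1 / 4 - lam * (b * v1) / 4"
    unfolding pure0 y0 by (simp add: field_simps)
  have q1: "pure v1 Y 1 = v1 - b * v1 / 2 - 1"
    unfolding pure1 y0 y1 by (simp add: field_simps)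
  have q2: "pure v1 Y 2 = v1 - b * v1 / 4 + lam * (b * v1) / 4 - 2"
    unfolding pure2 y0 y1 y2 by (simp add: field_simps)
  have best1: "pure v1 Y k \<le> pure v1 Y 1" for k
  proof -
    consider "k = 0" | "k = 1" | "k = 2" | "k \<ge> 3" by linarith
    then show ?thesis
    proof cases
      case 1 then show ?thesis using q0 q1 lo' by simp
    next
      case 2 then show ?thesis by simp
    next
      case 3 then show ?thesis using q2 q1 hi' by simp
    next
      case 4
      then have "pure v1 Y k = v1 - real k" "real k \<ge> 3" using pure_big[OF sub] by auto
      then show ?thesis using q1 b4' by simp
    qed
  qed
  have one: "payoff v1 X Y = pure v1 Y 1" unfolding X1 U_O1_def payoff_return ..
  have p2le: "pure 2 X k \<le> 0" for k
  proof -
    consider "k = 0" | "k = 1" | "k \<ge> 2" by linarith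
    then show ?thesis
      by cases (auto simp: X1 U_O1_def pure_r1_0 pure_r1_1 pure_r1_2 pure_r1_S)
  qed
  have p2eq: "pure 2 X k = 0" if k2: "k \<le> 2" for k
  proof -
    consider "k = 0" | "k = 1" | "k = 2" using k2 by linarith
    then show ?thesis
      by cases (auto simp: X1 U_O1_def pure_r1_0 pure_r1_1 pure_r1_2 pure_r1_S)
  qed
  have u2: "payoff 2 Y X = 0"
  proof -
    have "payoff 2 Y X = measure_pmf.expectation Y (pure 2 X)" using payoff_eq[OF YS] .
    also have "\<dots> = (\<Sum>a\<in>{}. pure 2 X a * pmf Y a)"
      by (rule integral_measure_pmf_real) (use sub p2eq in auto)
    finally show ?thesis by simp
  qed
  have N1: "payoff v1 X' Y \<le> payoff v1 X Y" if "is_strategy X'" for X'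
  proof -
    have "payoff v1 X' Y = measure_pmf.expectation X' (pure v1 Y)" using payoff_eq[OF that] .
    also have "\<dots> \<le> measure_pmf.expectation X' (\<lambda>_. pure v1 Y 1)"
      using integrable_pure[OF that] best1 by (intro integral_mono) auto
    finally show ?thesis using one by simp
  qed
  have N2: "payoff 2 Y' X \<le> payoff 2 Y X" if "is_strategy Y'" for Y'
  proof -
    have "payoff 2 Y' X = measure_pmf.expectation Y' (pure 2 X)" using payoff_eq[OF that] .
    also have "\<dots> \<le> measure_pmf.expectation Y' (\<lambda>_. 0)"
      using integrable_pure[OF that] p2le by (intro integral_mono) auto
    finally show ?thesis using u2 by simp
  qed
  have "payoff v1 X Y = v1 / 2 * (2 - b) - 1" using one q1 by (simp add: algebra_simps)
  then show ?thesis using N1 N2 XS YS u2 unfolding nash_def by blast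
qed


theorem proposition4:
  fixes v1 v2 b :: real and X Y :: "nat pmf"
  assumes "v1 \<ge> v2" and "v2 > 0" and "0 < b" and "b < 1"
    and "is_strategy X" and "is_strategy Y"
    and "mean X = 1" and "mean Y = b"
  shows "(nash v1 v2 X Y \<longleftrightarrow>
            v2 = 2 \<and> b \<le> 4 / v1 \<and> X = U_O1 \<and>
            (\<exists>lam. 0 \<le> lam \<and> lam \<le> 1 \<and>
                   4 / (b * v1) - 2 / b + 1 \<le> lam \<and> lam \<le> 4 / (b * v1) - 1 \<and>
                   Y = mix (1 - b) (return_pmf 0) (mix lam U_O1 U_E1)))
       \<and> (nash v1 v2 X Y \<longrightarrow>
            payoff v1 X Y = v1 / 2 * (2 - b) - 1 \<and> payoff v2 Y X = 0)"
proof -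
  have S: "nash v1 v2 X Y \<and> payoff v1 X Y = v1 / 2 * (2 - b) - 1 \<and> payoff v2 Y X = 0"
    if C: "v2 = 2 \<and> b \<le> 4 / v1 \<and> X = U_O1 \<and>
            (\<exists>lam. 0 \<le> lam \<and> lam \<le> 1 \<and>
                   4 / (b * v1) - 2 / b + 1 \<le> lam \<and> lam \<le> 4 / (b * v1) - 1 \<and>
                   Y = mix (1 - b) (return_pmf 0) (mix lam U_O1 U_E1))"
  proof -
    from C obtain lam where l: "0 \<le> lam" "lam \<le> 1" "4 / (b * v1) - 2 / b + 1 \<le> lam"
      "lam \<le> 4 / (b * v1) - 1" "Y = mix (1 - b) (return_pmf 0) (mix lam U_O1 U_E1)" by blast
    have "v1 \<ge> 2" using C assms(1) by simp
    from suff[OF this assms(3,4) _ l(1-4) assms(5,6) _ l(5)] C show ?thesis by simp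
  qed
  have Nc: "v2 = 2 \<and> b \<le> 4 / v1 \<and> X = U_O1 \<and>
            (\<exists>lam. 0 \<le> lam \<and> lam \<le> 1 \<and>
                   4 / (b * v1) - 2 / b + 1 \<le> lam \<and> lam \<le> 4 / (b * v1) - 1 \<and>
                   Y = mix (1 - b) (return_pmf 0) (mix lam U_O1 U_E1))"
    if "nash v1 v2 X Y" using nec[OF assms that] .
  show ?thesis using S Nc by blast
qed

end
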